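(* Let $\mathcal{X},\mathcal{Y}$ be finite, $p(X,Y)\in\Delta_{\mathcal{X}\times\mathcal{Y}}$ with $p(X)$ of full support, $\Lambda:=I(X;Y)$. For every $0\le\lambda\le\Lambda$, every $q(T|X)\in\mathrm{IB}(\lambda)$ factorises as $q(T|X)=\bar q\circ\pi_{\mathcal{X}}$, i.e. $q(t|x)=\bar q(t|\pi_{\mathcal{X}}(x))$ for all $x,t$.
   Context: $\mathcal{T}=\mathbb{N}$. For $q(T|X)\in C(\mathcal{X},\mathcal{T})$ the joint is $q(x,y,t)=p(x,y)q(t|x)$. $\mathrm{IB}(\lambda):=\operatorname{argmin}\{I_q(X;T): q(T|X)\in C(\mathcal{X},\mathcal{T}),\ I_q(T;Y)\ge\lambda\}$. The relation $x\sim_{\mathcal{X}}x'\iff p(Y|x)=p(Y|x')$ has partition $\bar{\mathcal{X}}=\{\mathcal{X}_j\}_j$ and projection $\pi_{\mathcal{X}}$; $\bar q(t|\mathcal{X}_j):=\frac{\sum_{x\in\mathcal{X}_j}q(t|x)p(x)}{p(\mathcal{X}_j)}$. *)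

theory Defs
  imports "HOL-Analysis.Analysis"
begin

definition joint_dist :: "('x::finite \<Rightarrow> 'y::finite \<Rightarrow> real) \<Rightarrow> bool" where
  "joint_dist p \<longleftrightarrow> (\<forall>x y. 0 \<le> p x y) \<and> (\<Sum>x\<in>UNIV. \<Sum>y\<in>UNIV. p x y) = 1"

definition margX :: "('x::finite \<Rightarrow> 'y::finite \<Rightarrow> real) \<Rightarrow> 'x \<Rightarrow> real" where
  "margX p x = (\<Sum>y\<in>UNIV. p x y)"

definition margY :: "('x::finite \<Rightarrow> 'y::finite \<Rightarrow> real) \<Rightarrow> 'y \<Rightarrow> real" where
  "margY p y = (\<Sum>x\<in>UNIV. p x y)"

definition condY :: "('x::finite \<Rightarrow> 'y::finite \<Rightarrow> real) \<Rightarrow> 'x \<Rightarrow> 'y \<Rightarrow> real" where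
  "condY p x y = p x y / margX p x"

text \<open>Mutual information I(X;Y) (natural log; 0 log 0 = 0 since terms are multiplied by 0).\<close>
definition MI_XY :: "('x::finite \<Rightarrow> 'y::finite \<Rightarrow> real) \<Rightarrow> real" where
  "MI_XY p = (\<Sum>x\<in>UNIV. \<Sum>y\<in>UNIV. p x y * ln (p x y / (margX p x * margY p y)))"

text \<open>Channels C(X,T) with T = nat: q x t = q(t|x).\<close>
definition channel :: "('x \<Rightarrow> nat \<Rightarrow> real) \<Rightarrow> bool" where
  "channel q \<longleftrightarrow> (\<forall>x t. 0 \<le> q x t) \<and> (\<forall>x. (q x has_sum 1) UNIV)"

definition qT :: "('x::finite \<Rightarrow> 'y::finite \<Rightarrow> real) \<Rightarrow> ('x \<Rightarrow> nat \<Rightarrow> real) \<Rightarrow> nat \<Rightarrow> real" where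
  "qT p q t = (\<Sum>x\<in>UNIV. margX p x * q x t)"

definition qTY :: "('x::finite \<Rightarrow> 'y::finite \<Rightarrow> real) \<Rightarrow> ('x \<Rightarrow> nat \<Rightarrow> real) \<Rightarrow> nat \<Rightarrow> 'y \<Rightarrow> real" where
  "qTY p q t y = (\<Sum>x\<in>UNIV. p x y * q x t)"

text \<open>I_q(X;T), summed over t; each t-summand is nonnegative (a weighted KL divergence),
  and the series converges since I(X;T) \<le> H(X).\<close>
definition MI_XT :: "('x::finite \<Rightarrow> 'y::finite \<Rightarrow> real) \<Rightarrow> ('x \<Rightarrow> nat \<Rightarrow> real) \<Rightarrow> real" where
  "MI_XT p q = infsum (\<lambda>t. \<Sum>x\<in>UNIV. margX p x * q x t * ln ((margX p x * q x t) / (margX p x * qT p q t))) UNIV"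

definition MI_TY :: "('x::finite \<Rightarrow> 'y::finite \<Rightarrow> real) \<Rightarrow> ('x \<Rightarrow> nat \<Rightarrow> real) \<Rightarrow> real" where
  "MI_TY p q = infsum (\<lambda>t. \<Sum>y\<in>UNIV. qTY p q t y * ln (qTY p q t y / (qT p q t * margY p y))) UNIV"

definition IB :: "('x::finite \<Rightarrow> 'y::finite \<Rightarrow> real) \<Rightarrow> real \<Rightarrow> ('x \<Rightarrow> nat \<Rightarrow> real) set" where
  "IB p lam = {q. channel q \<and> lam \<le> MI_TY p q \<and>
     (\<forall>q'. channel q' \<and> lam \<le> MI_TY p q' \<longrightarrow> MI_XT p q \<le> MI_XT p q')}"

definition piX :: "('x::finite \<Rightarrow> 'y::finite \<Rightarrow> real) \<Rightarrow> 'x \<Rightarrow> 'x set" where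
  "piX p x = {x'. condY p x' = condY p x}"

definition qbar :: "('x::finite \<Rightarrow> 'y::finite \<Rightarrow> real) \<Rightarrow> ('x \<Rightarrow> nat \<Rightarrow> real) \<Rightarrow> 'x set \<Rightarrow> nat \<Rightarrow> real" where
  "qbar p q C t = (\<Sum>x\<in>C. q x t * margX p x) / (\<Sum>x\<in>C. margX p x)"

end

theory Submission imports Defs begin

lemma class_sym: "x' \<in> piX p x \<longleftrightarrow> x \<in> piX p x'"
  by (auto simp: piX_def)
lemma class_eq: "x' \<in> piX p x \<Longrightarrow> piX p x' = piX p x"
  by (auto simp: piX_def)
lemma self_in: "x \<in> piX p x"
  by (auto simp: piX_def)

lemma Mpos:
  fixes p :: "'x::finite \<Rightarrow> 'y::finite \<Rightarrow> real"
  assumes "\<forall>x. 0 < margX p x"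
  shows "0 < (\<Sum>x'\<in>piX p x. margX p x')"
  by (rule sum_pos2[where i=x]) (use assms self_in in \<open>auto intro: less_imp_le\<close>)

lemma swap_lemma:
  fixes p :: "'x::finite \<Rightarrow> 'y::finite \<Rightarrow> real"
  assumes pos: "\<forall>x. 0 < margX p x" and g: "\<And>x x'. x' \<in> piX p x \<Longrightarrow> g x' = g x"
  shows "(\<Sum>x\<in>UNIV. margX p x * g x * qbar p q (piX p x) t) = (\<Sum>x\<in>UNIV. margX p x * g x * q x t)"
proof -
  define m where "m = margX p"
  define C where "C = piX p"
  define M where "M = (\<lambda>x. \<Sum>x'\<in>C x. m x')"
  have Mp: "\<And>x. 0 < M x" unfolding M_def C_def m_def using Mpos[OF pos] by blast
  have "(\<Sum>x\<in>UNIV. m x * g x * qbar p q (C x) t)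
      = (\<Sum>x\<in>UNIV. \<Sum>x'\<in>UNIV. if x' \<in> C x then m x * g x * (q x' t * m x') / M x else 0)"
  proof (rule sum.cong[OF refl])
    fix x
    have "m x * g x * qbar p q (C x) t = (\<Sum>x'\<in>C x. m x * g x * (q x' t * m x') / M x)"
      unfolding qbar_def M_def m_def by (simp add: sum_distrib_left sum_divide_distrib)
    also have "\<dots> = (\<Sum>x'\<in>UNIV. if x' \<in> C x then m x * g x * (q x' t * m x') / M x else 0)"
      using sum.inter_restrict[of UNIV "\<lambda>x'. m x * g x * (q x' t * m x') / M x" "C x"] by simp
    finally show "m x * g x * qbar p q (C x) t = (\<Sum>x'\<in>UNIV. if x' \<in> C x then m x * g x * (q x' t * m x') / M x else 0)" .
  qed
  also have "\<dots> = (\<Sum>x'\<in>UNIV. \<Sum>x\<in>UNIV. if x' \<in> C x then m x * g x * (q x' t * m x') / M x else 0)"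
    by (rule sum.swap)
  also have "\<dots> = (\<Sum>x'\<in>UNIV. m x' * g x' * q x' t)"
  proof (rule sum.cong[OF refl])
    fix x'
    have "(\<Sum>x\<in>UNIV. if x' \<in> C x then m x * g x * (q x' t * m x') / M x else 0)
        = (\<Sum>x\<in>UNIV. if x \<in> C x' then m x * (g x' * (q x' t * m x') / M x') else 0)"
    proof (rule sum.cong[OF refl])
      fix x
      show "(if x' \<in> C x then m x * g x * (q x' t * m x') / M x else 0)
        = (if x \<in> C x' then m x * (g x' * (q x' t * m x') / M x') else 0)"
      proof (cases "x' \<in> C x")
        case True
        hence "x \<in> C x'" using class_sym unfolding C_def by metis
        moreover have "C x' = C x" using True class_eq unfolding C_def by metis
        moreover have "g x' = g x" using True g unfolding C_def by metis
        ultimately show ?thesis using True unfolding M_def by simp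
      next
        case False
        hence "x \<notin> C x'" using class_sym unfolding C_def by metis
        then show ?thesis using False by simp
      qed
    qed
    also have "\<dots> = (\<Sum>x\<in>C x'. m x * (g x' * (q x' t * m x') / M x'))"
      using sum.inter_restrict[of UNIV "\<lambda>x. m x * (g x' * (q x' t * m x') / M x')" "C x'"] by simp
    also have "\<dots> = M x' * (g x' * (q x' t * m x') / M x')"
      unfolding M_def by (simp add: sum_distrib_right sum_divide_distrib)
    also have "\<dots> = m x' * g x' * q x' t" using Mp[of x'] by (simp add: field_simps)
    finally show "(\<Sum>x\<in>UNIV. if x' \<in> C x then m x * g x * (q x' t * m x') / M x else 0) = m x' * g x' * q x' t" .
  qed
  finally show ?thesis unfolding m_def C_def .
qed

lemma has_sum_finsum:
  fixes f :: "'a \<Rightarrow> 'b \<Rightarrow> real"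
  assumes "finite S" "\<And>x. x \<in> S \<Longrightarrow> (f x has_sum s x) A"
  shows "((\<lambda>t. \<Sum>x\<in>S. f x t) has_sum (\<Sum>x\<in>S. s x)) A"
  using assms
proof (induction S rule: finite_induct)
  case empty then show ?case by simp
next
  case (insert x S)
  then show ?case by (simp add: has_sum_add)
qed


definition Fr :: "('x::finite \<Rightarrow> 'y::finite \<Rightarrow> real) \<Rightarrow> ('x \<Rightarrow> nat \<Rightarrow> real) \<Rightarrow> nat \<Rightarrow> real" where
  "Fr p r t = (\<Sum>x\<in>UNIV. margX p x * r x t * ln ((margX p x * r x t) / (margX p x * qT p r t)))"

lemma MI_XT_Fr: "MI_XT p r = infsum (Fr p r) UNIV"
  unfolding MI_XT_def Fr_def ..

lemma qT_ge:
  fixes p :: "'x::finite \<Rightarrow> 'y::finite \<Rightarrow> real"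
  assumes pos: "\<forall>x. 0 < margX p x" and nn: "\<And>x. 0 \<le> r x t"
  shows "margX p x * r x t \<le> qT p r t"
  unfolding qT_def
  by (rule member_le_sum[where f="\<lambda>x. margX p x * r x t"]) (use pos nn in \<open>auto intro: less_imp_le mult_nonneg_nonneg\<close>)

lemma Fr_eq:
  fixes p :: "'x::finite \<Rightarrow> 'y::finite \<Rightarrow> real"
  assumes pos: "\<forall>x. 0 < margX p x" and nn: "\<And>x. 0 \<le> r x t"
  shows "Fr p r t = (\<Sum>x\<in>UNIV. margX p x * (r x t * ln (r x t))) - qT p r t * ln (qT p r t)"
proof -
  have tm: "margX p x * r x t * ln ((margX p x * r x t) / (margX p x * qT p r t))
     = margX p x * (r x t * ln (r x t)) - margX p x * r x t * ln (qT p r t)" for x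
  proof (cases "r x t = 0")
    case True then show ?thesis by simp
  next
    case False
    hence rp: "0 < r x t" using nn[of x] by simp
    have "margX p x * r x t \<le> qT p r t" using qT_ge[of p r t x] pos nn by blast
    moreover have "0 < margX p x * r x t" using pos rp by simp
    ultimately have Qp: "0 < qT p r t" by linarith
    have "(margX p x * r x t) / (margX p x * qT p r t) = r x t / qT p r t"
      using pos by (simp add: less_imp_neq[symmetric])
    then show ?thesis using rp Qp by (simp add: ln_div algebra_simps)
  qed
  have "Fr p r t = (\<Sum>x\<in>UNIV. margX p x * (r x t * ln (r x t)) - margX p x * r x t * ln (qT p r t))"
    unfolding Fr_def using tm by simp
  also have "\<dots> = (\<Sum>x\<in>UNIV. margX p x * (r x t * ln (r x t))) - qT p r t * ln (qT p r t)"
    unfolding qT_def by (simp add: sum_subtractf sum_distrib_right)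
  finally show ?thesis .
qed

lemma term_bound:
  fixes m r Q :: real
  assumes mp: "0 < m" and r: "0 \<le> r" and Q: "m * r \<le> Q"
  shows "\<bar>m * r * ln ((m * r) / (m * Q))\<bar> \<le> m * Q + m * r * \<bar>ln m\<bar>"
proof (cases "r = 0")
  case True
  then show ?thesis using Q mp by simp
next
  case False
  hence rp: "0 < r" using r by simp
  have Qp: "0 < Q" using mp rp Q by (smt (verit) mult_pos_pos)
  have eq: "(m * r) / (m * Q) = r / Q" using mp by simp
  have up: "ln (r / Q) \<le> - ln m"
  proof -
    have "r / Q \<le> 1 / m" using Q mp Qp by (simp add: field_simps)
    hence "ln (r / Q) \<le> ln (1 / m)" using rp Qp mp by simp
    thus ?thesis using mp by (simp add: ln_div)
  qed
  have low: "ln (r / Q) \<ge> 1 - Q / r"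
  proof -
    have "ln (Q / r) \<le> Q / r - 1" using ln_le_minus_one Qp rp by simp
    moreover have "ln (r / Q) = - ln (Q / r)" using rp Qp by (simp add: ln_div)
    ultimately show ?thesis by simp
  qed
  have mr: "0 < m * r" using mp rp by simp
  have A: "m * r * ln (r / Q) \<le> m * r * \<bar>ln m\<bar>"
    using mult_left_mono[OF up, of "m * r"] mr by (smt (verit) mult_left_mono)
  have B: "m * r * ln (r / Q) \<ge> m * r * (1 - Q / r)"
    using mult_left_mono[OF low, of "m*r"] mr by simp
  have "m * r * (1 - Q / r) = m * r - m * Q" using rp by (simp add: field_simps)
  hence B': "m * r * ln (r / Q) \<ge> - (m * Q)" using B mr by linarith
  have "0 \<le> m * r * \<bar>ln m\<bar>" using mr by simp
  moreover have "0 \<le> m * Q" using mp Qp by simp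
  ultimately show ?thesis using A B' eq by (simp add: abs_le_iff)
qed


lemma qT_has_sum:
  fixes p :: "'x::finite \<Rightarrow> 'y::finite \<Rightarrow> real"
  assumes ch: "channel r"
  shows "(qT p r has_sum (\<Sum>x\<in>UNIV. margX p x)) UNIV"
proof -
  have "((\<lambda>t. \<Sum>x\<in>UNIV. margX p x * r x t) has_sum (\<Sum>x\<in>UNIV. margX p x * 1)) UNIV"
  proof (rule has_sum_finsum[where f="\<lambda>x t. margX p x * r x t" and s="\<lambda>x. margX p x * 1"])
    fix x
    have "(r x has_sum 1) UNIV" using ch by (simp add: channel_def)
    thus "((\<lambda>t. margX p x * r x t) has_sum margX p x * 1) UNIV" by (rule has_sum_cmult_right)
  qed simp
  then show ?thesis unfolding qT_def[abs_def] by simp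
qed

lemma Fr_summable:
  fixes p :: "'x::finite \<Rightarrow> 'y::finite \<Rightarrow> real"
  assumes pos: "\<forall>x. 0 < margX p x" and ch: "channel r"
  shows "Fr p r summable_on UNIV"
proof -
  define G where "G = (\<lambda>t. \<Sum>x\<in>UNIV. margX p x * qT p r t + margX p x * \<bar>ln (margX p x)\<bar> * r x t)"
  have Gs: "(G has_sum (\<Sum>x\<in>UNIV. margX p x * (\<Sum>x\<in>UNIV. margX p x) + margX p x * \<bar>ln (margX p x)\<bar> * 1)) UNIV"
    unfolding G_def
    apply (rule has_sum_finsum[where f="\<lambda>x t. margX p x * qT p r t + margX p x * \<bar>ln (margX p x)\<bar> * r x t"
              and s="\<lambda>x. margX p x * (\<Sum>x\<in>UNIV. margX p x) + margX p x * \<bar>ln (margX p x)\<bar> * 1"])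
     apply simp
    apply (rule has_sum_add)
     apply (rule has_sum_cmult_right[where f="qT p r"])
     apply (rule qT_has_sum[OF ch])
    apply (rule has_sum_cmult_right[where f="r _"])
    using ch by (auto simp: channel_def)
  have nn: "\<And>x t. 0 \<le> r x t" using ch by (simp add: channel_def)
  have Qn: "0 \<le> qT p r t" for t
    unfolding qT_def by (intro sum_nonneg mult_nonneg_nonneg) (use pos nn in \<open>auto intro: less_imp_le\<close>)
  have qge: "margX p x * r x t \<le> qT p r t" for x t using qT_ge[of p r t x] pos nn by blast
  have Gnn: "0 \<le> G t" for t
    unfolding G_def by (intro sum_nonneg add_nonneg_nonneg mult_nonneg_nonneg) (use pos nn Qn in \<open>auto intro: less_imp_le\<close>)
  have bnd: "norm (Fr p r t) \<le> norm (G t)" for t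
  proof -
    have "norm (Fr p r t) \<le> (\<Sum>x\<in>UNIV. \<bar>margX p x * r x t * ln ((margX p x * r x t) / (margX p x * qT p r t))\<bar>)"
      unfolding Fr_def real_norm_def by (rule sum_abs)
    also have "\<dots> \<le> G t"
      unfolding G_def
      apply (rule sum_mono)
      subgoal for x using term_bound[of "margX p x" "r x t" "qT p r t"] pos nn[of x t] qge[of x t]
        by (simp add: mult_ac)
      done


    finally show ?thesis using Gnn by simp
  qed
  have "G summable_on UNIV" using Gs by (rule has_sum_imp_summable)
  hence "(\<lambda>t. norm (Fr p r t)) summable_on UNIV"
    by (rule Infinite_Sum.abs_summable_on_comparison_test') (use bnd Gnn in auto)
  thus ?thesis by (rule Infinite_Sum.abs_summable_summable)
qed

definition hh :: "real \<Rightarrow> real \<Rightarrow> real" where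
  "hh u a = u * ln u - a * ln a - (if 0 < a then (ln a + 1) * (u - a) else 0)"

lemma ln_strict: "0 < (y::real) \<Longrightarrow> y \<noteq> 1 \<Longrightarrow> ln y < y - 1"
proof -
  assume y: "0 < y" "y \<noteq> 1"
  have s: "0 < sqrt y" "sqrt y \<noteq> 1" using y by auto
  have "ln y = 2 * ln (sqrt y)" using y by (simp add: ln_sqrt)
  also have "\<dots> \<le> 2 * (sqrt y - 1)" using ln_le_minus_one[OF s(1)] by simp
  also have "\<dots> < y - 1"
  proof -
    have "0 < (sqrt y - 1)^2" using s by simp
    moreover have "(sqrt y)^2 = y" using y by simp
    ultimately show ?thesis by (simp add: power2_eq_square algebra_simps)
  qed
  finally show ?thesis .
qed

lemma hh_pos:
  assumes u: "0 \<le> u" and a: "0 \<le> a" and a0: "a = 0 \<Longrightarrow> u = 0" and ne: "u \<noteq> a"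
  shows "0 < hh u a"
proof -
  have ap: "0 < a" using a a0 ne by force
  show ?thesis
  proof (cases "u = 0")
    case True
    then show ?thesis using ap by (simp add: hh_def algebra_simps)
  next
    case False
    hence up: "0 < u" using u by simp
    have "ln (a / u) < a / u - 1" using ln_strict[of "a/u"] ap up ne by simp
    hence "ln a - ln u < a / u - 1" using ap up by (simp add: ln_div)
    hence "u * (ln a - ln u) < u * (a / u - 1)" using up by simp
    hence "u * ln a - u * ln u < a - u" using up by (simp add: algebra_simps)
    then show ?thesis using ap by (simp add: hh_def algebra_simps)
  qed
qed

lemma hh_nonneg:
  assumes u: "0 \<le> u" and a: "0 \<le> a" and a0: "a = 0 \<Longrightarrow> u = 0"
  shows "0 \<le> hh u a"
  using hh_pos[OF assms] by (cases "u = a") (auto simp: hh_def)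


definition qq :: "('x::finite \<Rightarrow> 'y::finite \<Rightarrow> real) \<Rightarrow> ('x \<Rightarrow> nat \<Rightarrow> real) \<Rightarrow> 'x \<Rightarrow> nat \<Rightarrow> real" where
  "qq p q x t = qbar p q (piX p x) t"

lemma qq_nonneg:
  fixes p :: "'x::finite \<Rightarrow> 'y::finite \<Rightarrow> real"
  assumes pos: "\<forall>x. 0 < margX p x" and nn: "\<And>x t. 0 \<le> q x t"
  shows "0 \<le> qq p q x t"
  unfolding qq_def qbar_def
  by (intro divide_nonneg_nonneg sum_nonneg mult_nonneg_nonneg) (use pos nn in \<open>auto intro: less_imp_le\<close>)

lemma qq_zero:
  fixes p :: "'x::finite \<Rightarrow> 'y::finite \<Rightarrow> real"
  assumes pos: "\<forall>x. 0 < margX p x" and nn: "\<And>x t. 0 \<le> q x t" and z: "qq p q x t = 0"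
  shows "q x t = 0"
proof -
  have M: "0 < (\<Sum>x'\<in>piX p x. margX p x')" using Mpos[OF pos] .
  have "(\<Sum>x'\<in>piX p x. q x' t * margX p x') = 0"
    using z M unfolding qq_def qbar_def by simp
  moreover have "\<forall>x'\<in>piX p x. 0 \<le> q x' t * margX p x'" using pos nn by (auto intro: mult_nonneg_nonneg less_imp_le)
  ultimately have "\<forall>x'\<in>piX p x. q x' t * margX p x' = 0"
    using sum_nonneg_eq_0_iff[of "piX p x" "\<lambda>x'. q x' t * margX p x'"] by simp
  hence "q x t * margX p x = 0" using self_in by blast
  thus ?thesis using pos[rule_format, of x] by simp
qed

lemma qq_channel:
  fixes p :: "'x::finite \<Rightarrow> 'y::finite \<Rightarrow> real"
  assumes pos: "\<forall>x. 0 < margX p x" and ch: "channel q"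
  shows "channel (qq p q)"
proof -
  have nn: "\<And>x t. 0 \<le> q x t" using ch by (simp add: channel_def)
  have "(qq p q x has_sum 1) UNIV" for x
  proof -
    define M where "M = (\<Sum>x'\<in>piX p x. margX p x')"
    have M: "0 < M" unfolding M_def using Mpos[OF pos] .
    have "((\<lambda>t. \<Sum>x'\<in>piX p x. q x' t * margX p x') has_sum (\<Sum>x'\<in>piX p x. 1 * margX p x')) UNIV"
    proof (rule has_sum_finsum[where f="\<lambda>x' t. q x' t * margX p x'" and s="\<lambda>x'. 1 * margX p x'"])
      fix x'
      have "(q x' has_sum 1) UNIV" using ch by (simp add: channel_def)
      thus "((\<lambda>t. q x' t * margX p x') has_sum 1 * margX p x') UNIV" by (rule has_sum_cmult_left)
    qed simp
    hence h1: "((\<lambda>t. \<Sum>x'\<in>piX p x. q x' t * margX p x') has_sum M) UNIV"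
      unfolding M_def by simp
    have "((\<lambda>t. (\<Sum>x'\<in>piX p x. q x' t * margX p x') / M) has_sum (M / M)) UNIV"
      by (rule has_sum_divide_const[OF h1])
    thus ?thesis using M unfolding qq_def[abs_def] qbar_def M_def by simp
  qed
  thus ?thesis using qq_nonneg[OF pos nn] by (simp add: channel_def)
qed

lemma qT_qq:
  fixes p :: "'x::finite \<Rightarrow> 'y::finite \<Rightarrow> real"
  assumes pos: "\<forall>x. 0 < margX p x"
  shows "qT p (qq p q) = qT p q"
proof
  fix t
  show "qT p (qq p q) t = qT p q t"
    using swap_lemma[OF pos, of "\<lambda>_. 1" q t] unfolding qT_def qq_def by simp
qed

lemma qTY_qq:
  fixes p :: "'x::finite \<Rightarrow> 'y::finite \<Rightarrow> real"
  assumes pos: "\<forall>x. 0 < margX p x"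
  shows "qTY p (qq p q) = qTY p q"
proof (intro ext)
  fix t y
  have pe: "p x y = margX p x * condY p x y" for x
    using pos by (simp add: condY_def less_imp_neq[symmetric])
  have g: "\<And>x x'. x' \<in> piX p x \<Longrightarrow> condY p x' y = condY p x y" by (simp add: piX_def)
  show "qTY p (qq p q) t y = qTY p q t y"
    using swap_lemma[OF pos g, where q=q and t=t] unfolding qTY_def qq_def pe by simp
qed


lemma D_eq:
  fixes p :: "'x::finite \<Rightarrow> 'y::finite \<Rightarrow> real"
  assumes pos: "\<forall>x. 0 < margX p x" and nn: "\<And>x t. 0 \<le> q x t"
  shows "Fr p q t - Fr p (qq p q) t = (\<Sum>x\<in>UNIV. margX p x * hh (q x t) (qq p q x t))"
proof -
  define a where "a = (\<lambda>x. qq p q x t)"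
  define L where "L = (\<lambda>x. if 0 < a x then ln (a x) + 1 else 0)"
  have hx: "hh (q x t) (a x) = q x t * ln (q x t) - a x * ln (a x) - L x * (q x t - a x)" for x
    unfolding hh_def L_def by simp
  have g: "\<And>x x'. x' \<in> piX p x \<Longrightarrow> L x' = L x"
    unfolding L_def a_def qq_def using class_eq by metis
  have sw: "(\<Sum>x\<in>UNIV. margX p x * L x * a x) = (\<Sum>x\<in>UNIV. margX p x * L x * q x t)"
    using swap_lemma[OF pos g, where q=q and t=t] unfolding a_def qq_def .
  have "Fr p q t - Fr p (qq p q) t
     = (\<Sum>x\<in>UNIV. margX p x * (q x t * ln (q x t))) - (\<Sum>x\<in>UNIV. margX p x * (a x * ln (a x)))"
    using Fr_eq[OF pos, of q t] Fr_eq[OF pos, of "qq p q" t] qq_nonneg[OF pos nn] nn qT_qq[OF pos, of q]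
    unfolding a_def by simp
  also have "\<dots> = (\<Sum>x\<in>UNIV. margX p x * hh (q x t) (a x))
       + ((\<Sum>x\<in>UNIV. margX p x * L x * q x t) - (\<Sum>x\<in>UNIV. margX p x * L x * a x))"
    unfolding hx by (simp add: sum_subtractf sum.distrib algebra_simps)
  also have "\<dots> = (\<Sum>x\<in>UNIV. margX p x * hh (q x t) (a x))" using sw by simp
  finally show ?thesis unfolding a_def .
qed


theorem proposition1:
  fixes p :: "'x::finite \<Rightarrow> 'y::finite \<Rightarrow> real"
    and q :: "'x \<Rightarrow> nat \<Rightarrow> real"
    and lam :: real
  assumes "joint_dist p"
    and "\<forall>x. 0 < margX p x"
    and "0 \<le> lam" and "lam \<le> MI_XY p"
    and "q \<in> IB p lam"
  shows "\<forall>x t. q x t = qbar p q (piX p x) t"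
proof (rule ccontr)
  assume "\<not> (\<forall>x t. q x t = qbar p q (piX p x) t)"
  then obtain x0 t0 where ne: "q x0 t0 \<noteq> qq p q x0 t0" unfolding qq_def by blast
  have pos: "\<forall>x. 0 < margX p x" by fact
  have ch: "channel q" and lq: "lam \<le> MI_TY p q"
    and mini: "\<And>q'. channel q' \<Longrightarrow> lam \<le> MI_TY p q' \<Longrightarrow> MI_XT p q \<le> MI_XT p q'"
    using assms(5) unfolding IB_def by auto
  have nn: "\<And>x t. 0 \<le> q x t" using ch by (simp add: channel_def)
  have qz: "\<And>x t. qq p q x t = 0 \<Longrightarrow> q x t = 0" using qq_zero[OF pos] nn by blast
  have qn: "\<And>x t. 0 \<le> qq p q x t" using qq_nonneg[OF pos] nn by blast
  have ch': "channel (qq p q)" by (rule qq_channel[OF pos ch])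
  have "MI_TY p (qq p q) = MI_TY p q"
    unfolding MI_TY_def qTY_qq[OF pos] qT_qq[OF pos] ..
  hence le: "MI_XT p q \<le> MI_XT p (qq p q)" using mini[OF ch'] lq by simp
  define D where "D = (\<lambda>t. Fr p q t - Fr p (qq p q) t)"
  have s1: "(Fr p q has_sum MI_XT p q) UNIV"
    unfolding MI_XT_Fr using Fr_summable[OF pos ch] by simp
  have s2: "((\<lambda>t. - Fr p (qq p q) t) has_sum (- MI_XT p (qq p q))) UNIV"
    unfolding MI_XT_Fr has_sum_uminus using Fr_summable[OF pos ch'] by simp
  have "(D has_sum (MI_XT p q - MI_XT p (qq p q))) UNIV"
    using has_sum_add[OF s1 s2] unfolding D_def by simp
  moreover have Dnn: "0 \<le> D t" for t
    unfolding D_def D_eq[OF pos nn]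
    by (intro sum_nonneg mult_nonneg_nonneg hh_nonneg)
       (use pos nn qn qz in \<open>auto intro: less_imp_le\<close>)
  ultimately have "sum D {t0} \<le> MI_XT p q - MI_XT p (qq p q)"
    by (intro finite_sum_le_has_sum) auto
  moreover have "0 < D t0"
    unfolding D_def D_eq[OF pos nn]
  proof (rule sum_pos2[where i=x0])
    show "0 < margX p x0 * hh (q x0 t0) (qq p q x0 t0)"
      using pos hh_pos[OF nn[of x0 t0] qn[of x0 t0] qz[of x0 t0] ne] by simp
    show "\<And>x. x \<in> UNIV \<Longrightarrow> 0 \<le> margX p x * hh (q x t0) (qq p q x t0)"
      by (intro mult_nonneg_nonneg hh_nonneg) (use pos nn qn qz in \<open>auto intro: less_imp_le\<close>)
  qed auto
  ultimately show False using le by simp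
qed

end
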